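(* Let $\mathbf{I}$ be a $d$-system of ideals in a ring $R$, $A:=\mathscr{A}(R,\mathbf{I})$, $B:=\mathscr{A}(R^{\mathrm{op}},\mathring{\mathbf{I}})$, and identify $A$ and $B$ with their (faithful) images in $\mathrm{End}_{\mathbb{Z}}(\mathbb{T})$. Then $\mathrm{End}_A(\mathbb{T})=B$ and $\mathrm{End}_B(\mathbb{T})=A$.
   Context: A $d$-system of ideals in $R$ is a collection $\{I_{ij}\mid1\le i,j\le d+1\}$ of two-sided ideals with $I_{ij}I_{jk}\subset I_{ik}$ and $I_{ij}=R$ for $i\ge j$. $\mathscr{A}(R,\mathbf{I}):=\bigoplus_{1\le i,j\le d}X_{ij}$, $X_{ij}:=I_{ij}/I_{i,d+1}$, with multiplication $(x+I_{i,d+1})(y+I_{k,d+1})=\delta_{jk}(xy+I_{i,d+1})\in X_{il}$ for $x\in I_{ij},y\in I_{kl}$. The dual system in $R^{\mathrm{op}}$ is $\mathring{I}_{ij}:=I_{d+2-j,d+2-i}$, so that the $(i,j)$ component of $B$ is $I_{d+2-j,d+2-i}/I_{1,d+2-i}$. Define $\mathbb{T}_{kl}:=R/I_{k,d+2-l}$ for $1\le k,l\le d$ and $\mathbb{T}:=\bigoplus_{k,l}\mathbb{T}_{kl}$. $A$ acts on $\mathbb{T}$ by $(x+I_{i,d+1})\cdot(r+I_{k,d+2-l})=\delta_{jk}(xr+I_{i,d+2-l})\in\mathbb{T}_{il}$ for $x\in I_{ij}$, $r\in R$; $B$ acts by $(x+I_{1,d+2-i})\cdot(r+I_{k,d+2-l})=\delta_{jl}(rx+I_{k,d+2-i})\in\mathbb{T}_{ki}$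 for $x\in I_{d+2-j,d+2-i}$, $r\in R$. These actions are well defined, commute, and are faithful. *)

theory Defs
  imports Main
begin

definition two_sided_ideal :: "'a::ring_1 set \<Rightarrow> bool" where
  "two_sided_ideal J \<longleftrightarrow> 0 \<in> J \<and> (\<forall>x\<in>J. \<forall>y\<in>J. x + y \<in> J) \<and> (\<forall>x\<in>J. - x \<in> J)
     \<and> (\<forall>x\<in>J. \<forall>r. r * x \<in> J \<and> x * r \<in> J)"

definition d_system :: "nat \<Rightarrow> (nat \<Rightarrow> nat \<Rightarrow> 'a::ring_1 set) \<Rightarrow> bool" where
  "d_system d I \<longleftrightarrow>
     (\<forall>i j. 1 \<le> i \<and> i \<le> d+1 \<and> 1 \<le> j \<and> j \<le> d+1 \<longrightarrow> two_sided_ideal (I i j)) \<and>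
     (\<forall>i j k. 1 \<le> i \<and> i \<le> d+1 \<and> 1 \<le> j \<and> j \<le> d+1 \<and> 1 \<le> k \<and> k \<le> d+1 \<longrightarrow>
        (\<forall>x\<in>I i j. \<forall>y\<in>I j k. x * y \<in> I i k)) \<and>
     (\<forall>i j. 1 \<le> i \<and> i \<le> d+1 \<and> 1 \<le> j \<and> j \<le> d+1 \<and> j \<le> i \<longrightarrow> I i j = UNIV)"

definition qcoset :: "'a::ring_1 set \<Rightarrow> 'a \<Rightarrow> 'a set" where
  "qcoset J r = (\<lambda>x. r + x) ` J"

definition quot :: "'a::ring_1 set \<Rightarrow> 'a set set" where
  "quot J = range (qcoset J)"

definition rep :: "'a set \<Rightarrow> 'a" where
  "rep C = (SOME x. x \<in> C)"

definition inrange :: "nat \<Rightarrow> nat \<Rightarrow> nat \<Rightarrow> bool" where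
  "inrange d i j \<longleftrightarrow> 1 \<le> i \<and> i \<le> d \<and> 1 \<le> j \<and> j \<le> d"

text \<open>The module T = \<Oplus>_{k,l} R/I_{k,d+2-l}: an element is a family of cosets indexed by
(k,l) in {1..d}^2, with the dummy value {0} outside that range.\<close>
definition Tcar :: "nat \<Rightarrow> (nat \<Rightarrow> nat \<Rightarrow> 'a::ring_1 set) \<Rightarrow> (nat \<Rightarrow> nat \<Rightarrow> 'a set) set" where
  "Tcar d I = {t. \<forall>k l. (inrange d k l \<longrightarrow> t k l \<in> quot (I k (d+2-l))) \<and>
                         (\<not> inrange d k l \<longrightarrow> t k l = {0})}"

definition Tadd :: "(nat \<Rightarrow> nat \<Rightarrow> 'a::ring_1 set) \<Rightarrow> (nat \<Rightarrow> nat \<Rightarrow> 'a set) \<Rightarrow> (nat \<Rightarrow> nat \<Rightarrow> 'a set)" where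
  "Tadd t s = (\<lambda>k l. {x + y | x y. x \<in> t k l \<and> y \<in> s k l})"

definition Acar :: "nat \<Rightarrow> (nat \<Rightarrow> nat \<Rightarrow> 'a::ring_1 set) \<Rightarrow> (nat \<Rightarrow> nat \<Rightarrow> 'a set) set" where
  "Acar d I = {a. \<forall>i j. (inrange d i j \<longrightarrow> (\<exists>x\<in>I i j. a i j = qcoset (I i (d+1)) x)) \<and>
                         (\<not> inrange d i j \<longrightarrow> a i j = {0})}"

text \<open>B = A(R^op, dual system): (i,j) component I_{d+2-j,d+2-i} / I_{1,d+2-i}.\<close>
definition Bcar :: "nat \<Rightarrow> (nat \<Rightarrow> nat \<Rightarrow> 'a::ring_1 set) \<Rightarrow> (nat \<Rightarrow> nat \<Rightarrow> 'a set) set" where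
  "Bcar d I = {b. \<forall>i j. (inrange d i j \<longrightarrow>
                            (\<exists>x\<in>I (d+2-j) (d+2-i). b i j = qcoset (I 1 (d+2-i)) x)) \<and>
                         (\<not> inrange d i j \<longrightarrow> b i j = {0})}"

definition actA :: "nat \<Rightarrow> (nat \<Rightarrow> nat \<Rightarrow> 'a::ring_1 set) \<Rightarrow> (nat \<Rightarrow> nat \<Rightarrow> 'a set)
    \<Rightarrow> (nat \<Rightarrow> nat \<Rightarrow> 'a set) \<Rightarrow> (nat \<Rightarrow> nat \<Rightarrow> 'a set)" where
  "actA d I a t = (\<lambda>i l. if inrange d i l
      then qcoset (I i (d+2-l)) (\<Sum>j=1..d. rep (a i j) * rep (t j l)) else {0})"

definition actB :: "nat \<Rightarrow> (nat \<Rightarrow> nat \<Rightarrow> 'a::ring_1 set) \<Rightarrow> (nat \<Rightarrow> nat \<Rightarrow> 'a set)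
    \<Rightarrow> (nat \<Rightarrow> nat \<Rightarrow> 'a set) \<Rightarrow> (nat \<Rightarrow> nat \<Rightarrow> 'a set)" where
  "actB d I b t = (\<lambda>k i. if inrange d k i
      then qcoset (I k (d+2-i)) (\<Sum>j=1..d. rep (t k j) * rep (b i j)) else {0})"

definition isEndZ :: "nat \<Rightarrow> (nat \<Rightarrow> nat \<Rightarrow> 'a::ring_1 set)
    \<Rightarrow> ((nat \<Rightarrow> nat \<Rightarrow> 'a set) \<Rightarrow> (nat \<Rightarrow> nat \<Rightarrow> 'a set)) \<Rightarrow> bool" where
  "isEndZ d I f \<longleftrightarrow> (\<forall>t\<in>Tcar d I. f t \<in> Tcar d I) \<and>
     (\<forall>t\<in>Tcar d I. \<forall>s\<in>Tcar d I. f (Tadd t s) = Tadd (f t) (f s))"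

definition EndA :: "nat \<Rightarrow> (nat \<Rightarrow> nat \<Rightarrow> 'a::ring_1 set)
    \<Rightarrow> ((nat \<Rightarrow> nat \<Rightarrow> 'a set) \<Rightarrow> (nat \<Rightarrow> nat \<Rightarrow> 'a set)) set" where
  "EndA d I = {f. isEndZ d I f \<and>
     (\<forall>a\<in>Acar d I. \<forall>t\<in>Tcar d I. f (actA d I a t) = actA d I a (f t))}"

definition EndB :: "nat \<Rightarrow> (nat \<Rightarrow> nat \<Rightarrow> 'a::ring_1 set)
    \<Rightarrow> ((nat \<Rightarrow> nat \<Rightarrow> 'a set) \<Rightarrow> (nat \<Rightarrow> nat \<Rightarrow> 'a set)) set" where
  "EndB d I = {f. isEndZ d I f \<and>
     (\<forall>b\<in>Bcar d I. \<forall>t\<in>Tcar d I. f (actB d I b t) = actB d I b (f t))}"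

end

theory Submission
  imports Defs
begin


lemma ti_zero: "two_sided_ideal J \<Longrightarrow> 0 \<in> J" by (simp add: two_sided_ideal_def)
lemma ti_add: "two_sided_ideal J \<Longrightarrow> x \<in> J \<Longrightarrow> y \<in> J \<Longrightarrow> x + y \<in> J" by (simp add: two_sided_ideal_def)
lemma ti_neg: "two_sided_ideal J \<Longrightarrow> x \<in> J \<Longrightarrow> - x \<in> J" by (simp add: two_sided_ideal_def)
lemma ti_lmul: "two_sided_ideal J \<Longrightarrow> x \<in> J \<Longrightarrow> r * x \<in> J" by (simp add: two_sided_ideal_def)
lemma ti_rmul: "two_sided_ideal J \<Longrightarrow> x \<in> J \<Longrightarrow> x * r \<in> J" by (simp add: two_sided_ideal_def)
lemma ti_diff: "two_sided_ideal J \<Longrightarrow> x \<in> J \<Longrightarrow> y \<in> J \<Longrightarrow> x - y \<in> J"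
  using ti_add ti_neg by (metis diff_conv_add_uminus)

lemma in_qcoset: "z \<in> qcoset J x \<longleftrightarrow> z - x \<in> J"
  unfolding qcoset_def image_iff
  by (metis add_diff_cancel_left' diff_add_cancel add.commute)

lemma self_in_qcoset: "two_sided_ideal J \<Longrightarrow> x \<in> qcoset J x"
  by (simp add: in_qcoset ti_zero)

lemma qcoset_eq: "two_sided_ideal J \<Longrightarrow> qcoset J x = qcoset J y \<longleftrightarrow> x - y \<in> J"
proof
  assume J: "two_sided_ideal J" and "qcoset J x = qcoset J y"
  then have "x \<in> qcoset J y" using self_in_qcoset by metis
  then show "x - y \<in> J" by (simp add: in_qcoset)
next
  assume J: "two_sided_ideal J" and xy: "x - y \<in> J"
  show "qcoset J x = qcoset J y"
  proof (rule set_eqI)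
    fix z
    have e1: "z - y = (z - x) + (x - y)" by simp
    have e2: "z - x = (z - y) - (x - y)" by simp
    show "z \<in> qcoset J x \<longleftrightarrow> z \<in> qcoset J y"
      unfolding in_qcoset using e1 e2 J xy ti_add ti_diff by metis
  qed
qed

lemma rep_in_qcoset: "two_sided_ideal J \<Longrightarrow> rep (qcoset J x) \<in> qcoset J x"
  unfolding rep_def by (rule someI, rule self_in_qcoset)

lemma rep_qc: "two_sided_ideal J \<Longrightarrow> rep (qcoset J x) - x \<in> J"
  using rep_in_qcoset in_qcoset by metis

lemma qc_rep: "two_sided_ideal J \<Longrightarrow> qcoset J (rep (qcoset J x)) = qcoset J x"
  using rep_qc qcoset_eq by metis

lemma qc_zero: "two_sided_ideal J \<Longrightarrow> qcoset J 0 = J"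
  by (simp add: qcoset_def)

lemma qc_is_J: "two_sided_ideal J \<Longrightarrow> qcoset J x = J \<longleftrightarrow> x \<in> J"
  using qc_zero qcoset_eq by (metis diff_zero)

lemma qc_add: "two_sided_ideal J \<Longrightarrow>
   {u + v |u v. u \<in> qcoset J x \<and> v \<in> qcoset J y} = qcoset J (x+y)"
proof (rule set_eqI)
  fix z assume J: "two_sided_ideal J"
  show "z \<in> {u + v |u v. u \<in> qcoset J x \<and> v \<in> qcoset J y} \<longleftrightarrow> z \<in> qcoset J (x+y)"
  proof
    assume "z \<in> {u + v |u v. u \<in> qcoset J x \<and> v \<in> qcoset J y}"
    then obtain u v where z: "z = u + v" "u - x \<in> J" "v - y \<in> J" by (auto simp: in_qcoset)
    have "z - (x + y) = (u - x) + (v - y)" using z by (simp add: algebra_simps)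
    then show "z \<in> qcoset J (x+y)" using z J ti_add[of J "u - x" "v - y"] by (metis in_qcoset)
  next
    assume "z \<in> qcoset J (x+y)"
    then have "(z - y) - x \<in> J" by (simp add: in_qcoset algebra_simps)
    moreover have "y - y \<in> J" using J ti_zero by simp
    moreover have "z = (z - y) + y" by simp
    ultimately show "z \<in> {u + v |u v. u \<in> qcoset J x \<and> v \<in> qcoset J y}"
      unfolding in_qcoset by blast
  qed
qed

lemma sum_in: assumes J: "two_sided_ideal J" and "finite A" shows "(\<forall>j\<in>A. f j \<in> J) \<Longrightarrow> sum f A \<in> J"
  using assms(2) by (induction A rule: finite_induct) (auto simp: ti_zero[OF J] ti_add[OF J])

lemma Tadd_zero: "Tadd t s k l = {0}" if "t k l = {0}" "s k l = {0}"
  using that by (auto simp: Tadd_def)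



locale dsys =
  fixes d :: nat and I :: "nat \<Rightarrow> nat \<Rightarrow> 'a::ring_1 set"
  assumes ds: "d_system d I"
begin

lemma idl: "1 \<le> i \<Longrightarrow> i \<le> d+1 \<Longrightarrow> 1 \<le> j \<Longrightarrow> j \<le> d+1 \<Longrightarrow> two_sided_ideal (I i j)"
  using ds unfolding d_system_def by blast

lemma mulI: "x \<in> I i j \<Longrightarrow> y \<in> I j k \<Longrightarrow> 1 \<le> i \<Longrightarrow> i \<le> d+1 \<Longrightarrow> 1 \<le> j \<Longrightarrow> j \<le> d+1
   \<Longrightarrow> 1 \<le> k \<Longrightarrow> k \<le> d+1 \<Longrightarrow> x * y \<in> I i k"
  using ds unfolding d_system_def by blast

lemma univ: "1 \<le> j \<Longrightarrow> j \<le> i \<Longrightarrow> i \<le> d+1 \<Longrightarrow> I i j = UNIV"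
  using ds unfolding d_system_def by auto

lemma subR: "x \<in> I i k \<Longrightarrow> j \<le> k \<Longrightarrow> 1 \<le> i \<Longrightarrow> i \<le> d+1 \<Longrightarrow> 1 \<le> j \<Longrightarrow> k \<le> d+1 \<Longrightarrow> x \<in> I i j"
  using mulI[of x i k 1 j] univ[of j k] by simp

lemma subL: "x \<in> I i k \<Longrightarrow> i \<le> j \<Longrightarrow> 1 \<le> i \<Longrightarrow> j \<le> d+1 \<Longrightarrow> 1 \<le> k \<Longrightarrow> k \<le> d+1 \<Longrightarrow> x \<in> I j k"
  using mulI[of 1 j i x k] univ[of i j] by simp

lemma actA_repr:
  assumes r: "inrange d i l"
    and h: "\<forall>j\<in>{1..d}. a i j = qcoset (I i (d+1)) (X j) \<and> X j \<in> I i j \<and> t j l = qcoset (I j (d+2-l)) (Y j)"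
  shows "actA d I a t i l = qcoset (I i (d+2-l)) (\<Sum>j=1..d. X j * Y j)"
proof -
  have J: "two_sided_ideal (I i (d+2-l))" using r by (intro idl) (auto simp: inrange_def)
  have "(\<Sum>j=1..d. rep (a i j) * rep (t j l)) - (\<Sum>j=1..d. X j * Y j) \<in> I i (d+2-l)"
    unfolding sum_subtractf[symmetric]
  proof (rule sum_in[OF J], simp, intro ballI)
    fix j assume j: "j \<in> {1..d}"
    have e: "rep (a i j) * rep (t j l) - X j * Y j = (rep (a i j) - X j) * rep (t j l) + X j * (rep (t j l) - Y j)"
      by (simp add: algebra_simps)
    have J1: "two_sided_ideal (I i (d+1))" using r by (intro idl) (auto simp: inrange_def)
    have J2: "two_sided_ideal (I j (d+2-l))" using r j by (intro idl) (auto simp: inrange_def)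
    have "rep (a i j) - X j \<in> I i (d+1)" using h j rep_qc[OF J1] by metis
    then have "(rep (a i j) - X j) * rep (t j l) \<in> I i (d+1)" using ti_rmul[OF J1] by blast
    then have 1: "(rep (a i j) - X j) * rep (t j l) \<in> I i (d+2-l)"
      using subR r by (auto simp: inrange_def)
    have "rep (t j l) - Y j \<in> I j (d+2-l)" using h j rep_qc[OF J2] by metis
    then have 2: "X j * (rep (t j l) - Y j) \<in> I i (d+2-l)"
      using mulI[of "X j" i j] h j r by (auto simp: inrange_def)
    show "rep (a i j) * rep (t j l) - X j * Y j \<in> I i (d+2-l)"
      unfolding e using ti_add[OF J 1 2] .
  qed
  then show ?thesis using r J unfolding actA_def by (simp add: qcoset_eq)
qed

lemma actB_repr:
  assumes r: "inrange d k i"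
    and h: "\<forall>j\<in>{1..d}. b i j = qcoset (I 1 (d+2-i)) (X j) \<and> X j \<in> I (d+2-j) (d+2-i) \<and> t k j = qcoset (I k (d+2-j)) (Y j)"
  shows "actB d I b t k i = qcoset (I k (d+2-i)) (\<Sum>j=1..d. Y j * X j)"
proof -
  have J: "two_sided_ideal (I k (d+2-i))" using r by (intro idl) (auto simp: inrange_def)
  have "(\<Sum>j=1..d. rep (t k j) * rep (b i j)) - (\<Sum>j=1..d. Y j * X j) \<in> I k (d+2-i)"
    unfolding sum_subtractf[symmetric]
  proof (rule sum_in[OF J], simp, intro ballI)
    fix j assume j: "j \<in> {1..d}"
    have e: "rep (t k j) * rep (b i j) - Y j * X j = (rep (t k j) - Y j) * rep (b i j) + Y j * (rep (b i j) - X j)"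
      by (simp add: algebra_simps)
    have J1: "two_sided_ideal (I 1 (d+2-i))" using r by (intro idl) (auto simp: inrange_def)
    have J2: "two_sided_ideal (I k (d+2-j))" using r j by (intro idl) (auto simp: inrange_def)
    have J3: "two_sided_ideal (I (d+2-j) (d+2-i))" using r j by (intro idl) (auto simp: inrange_def)
    have bx: "rep (b i j) - X j \<in> I 1 (d+2-i)" using h j rep_qc[OF J1] by metis
    then have "rep (b i j) - X j \<in> I (d+2-j) (d+2-i)" using subL r j by (auto simp: inrange_def)
    then have rb: "rep (b i j) \<in> I (d+2-j) (d+2-i)" using h j ti_add[OF J3] by (metis diff_add_cancel)
    have "rep (t k j) - Y j \<in> I k (d+2-j)" using h j rep_qc[OF J2] by metis
    then have 1: "(rep (t k j) - Y j) * rep (b i j) \<in> I k (d+2-i)"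
      using mulI rb r j by (auto simp: inrange_def)
    have Y: "Y j \<in> I k 1" using univ r by (auto simp: inrange_def)
    have 2: "Y j * (rep (b i j) - X j) \<in> I k (d+2-i)"
      using mulI[OF Y bx] r by (auto simp: inrange_def)
    show "rep (t k j) * rep (b i j) - Y j * X j \<in> I k (d+2-i)"
      unfolding e using ti_add[OF J 1 2] .
  qed
  then show ?thesis using r J unfolding actB_def by (simp add: qcoset_eq)
qed

end


context dsys
begin

definition Tm :: "(nat \<Rightarrow> nat \<Rightarrow> 'a) \<Rightarrow> nat \<Rightarrow> nat \<Rightarrow> 'a set" where
  "Tm Y = (\<lambda>k l. if inrange d k l then qcoset (I k (d+2-l)) (Y k l) else {0})"
definition Amat :: "(nat \<Rightarrow> nat \<Rightarrow> 'a) \<Rightarrow> nat \<Rightarrow> nat \<Rightarrow> 'a set" where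
  "Amat M = (\<lambda>i j. if inrange d i j then qcoset (I i (d+1)) (M i j) else {0})"
definition Bmat :: "(nat \<Rightarrow> nat \<Rightarrow> 'a) \<Rightarrow> nat \<Rightarrow> nat \<Rightarrow> 'a set" where
  "Bmat M = (\<lambda>i j. if inrange d i j then qcoset (I 1 (d+2-i)) (M i j) else {0})"

lemma idT: "inrange d k l \<Longrightarrow> two_sided_ideal (I k (d+2-l))"
  by (intro idl) (auto simp: inrange_def)
lemma idA: "inrange d i j \<Longrightarrow> two_sided_ideal (I i (d+1))"
  by (intro idl) (auto simp: inrange_def)
lemma idB: "inrange d i j \<Longrightarrow> two_sided_ideal (I 1 (d+2-i))"
  by (intro idl) (auto simp: inrange_def)

lemma Tm_T: "Tm Y \<in> Tcar d I"
  unfolding Tcar_def Tm_def quot_def by auto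

lemma T_Tm: assumes "t \<in> Tcar d I" shows "Tm (\<lambda>k l. rep (t k l)) = t"
proof (rule ext, rule ext)
  fix k l
  show "Tm (\<lambda>k l. rep (t k l)) k l = t k l"
  proof (cases "inrange d k l")
    case True
    have "t k l \<in> range (qcoset (I k (d+2-l)))" using assms True unfolding Tcar_def quot_def by blast
    then obtain x where "t k l = qcoset (I k (d+2-l)) x" by blast
    then show ?thesis using True qc_rep[OF idT[OF True]] by (simp add: Tm_def)
  next
    case False then show ?thesis using assms by (simp add: Tm_def Tcar_def)
  qed
qed

lemma Tm_eq: "Tm Y = Tm Y' \<longleftrightarrow> (\<forall>k l. inrange d k l \<longrightarrow> Y k l - Y' k l \<in> I k (d+2-l))"
proof
  assume e: "Tm Y = Tm Y'"
  show "\<forall>k l. inrange d k l \<longrightarrow> Y k l - Y' k l \<in> I k (d+2-l)"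
  proof (intro allI impI)
    fix k l assume r: "inrange d k l"
    have "Tm Y k l = Tm Y' k l" using e by simp
    then show "Y k l - Y' k l \<in> I k (d+2-l)" using r qcoset_eq[OF idT[OF r]] by (simp add: Tm_def)
  qed
next
  assume h: "\<forall>k l. inrange d k l \<longrightarrow> Y k l - Y' k l \<in> I k (d+2-l)"
  show "Tm Y = Tm Y'"
    by (rule ext, rule ext) (use h qcoset_eq[OF idT] in \<open>simp add: Tm_def\<close>)
qed

lemma Tm_add: "Tadd (Tm Y) (Tm Y') = Tm (\<lambda>k l. Y k l + Y' k l)"
proof (rule ext, rule ext)
  fix k l
  show "Tadd (Tm Y) (Tm Y') k l = Tm (\<lambda>k l. Y k l + Y' k l) k l"
  proof (cases "inrange d k l")
    case True
    then show ?thesis unfolding Tadd_def Tm_def using qc_add[OF idT[OF True]] by simp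
  next
    case False then show ?thesis unfolding Tadd_def Tm_def by auto
  qed
qed

lemma A_rep: assumes "a \<in> Acar d I" "inrange d i j"
  shows "rep (a i j) \<in> I i j \<and> a i j = qcoset (I i (d+1)) (rep (a i j))"
proof -
  have "\<exists>x\<in>I i j. a i j = qcoset (I i (d+1)) x" using assms unfolding Acar_def by blast
  then obtain x where x: "x \<in> I i j" "a i j = qcoset (I i (d+1)) x" by blast
  have J: "two_sided_ideal (I i (d+1))" using idA[OF assms(2)] .
  have "rep (a i j) - x \<in> I i (d+1)" using rep_qc[OF J] x by simp
  then have "rep (a i j) - x \<in> I i j" using subR assms(2) by (auto simp: inrange_def)
  moreover have "two_sided_ideal (I i j)" using assms(2) by (intro idl) (auto simp: inrange_def)
  ultimately have "rep (a i j) - x + x \<in> I i j" using ti_add x(1) by blast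
  then have "rep (a i j) \<in> I i j" by simp
  then show ?thesis using x qc_rep[OF J] by simp
qed

lemma A_Amat: assumes a: "a \<in> Acar d I" shows "Amat (\<lambda>i j. rep (a i j)) = a"
proof (rule ext, rule ext)
  fix i j show "Amat (\<lambda>i j. rep (a i j)) i j = a i j"
  proof (cases "inrange d i j")
    case True then show ?thesis using A_rep[OF a True] by (simp add: Amat_def)
  next
    case False
    have "a i j = {0}" using a False unfolding Acar_def by blast
    then show ?thesis using False by (simp add: Amat_def)
  qed
qed

lemma Amat_A: "(\<forall>i j. inrange d i j \<longrightarrow> M i j \<in> I i j) \<Longrightarrow> Amat M \<in> Acar d I"
  unfolding Acar_def Amat_def by auto

lemma B_rep: assumes "b \<in> Bcar d I" "inrange d i j"
  shows "rep (b i j) \<in> I (d+2-j) (d+2-i) \<and> b i j = qcoset (I 1 (d+2-i)) (rep (b i j))"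
proof -
  have "\<exists>x\<in>I (d+2-j) (d+2-i). b i j = qcoset (I 1 (d+2-i)) x" using assms unfolding Bcar_def by blast
  then obtain x where x: "x \<in> I (d+2-j) (d+2-i)" "b i j = qcoset (I 1 (d+2-i)) x" by blast
  have J: "two_sided_ideal (I 1 (d+2-i))" using idB[OF assms(2)] .
  have J3: "two_sided_ideal (I (d+2-j) (d+2-i))" using assms(2) by (intro idl) (auto simp: inrange_def)
  have "rep (b i j) - x \<in> I 1 (d+2-i)" using rep_qc[OF J] x by simp
  then have "rep (b i j) - x \<in> I (d+2-j) (d+2-i)" using subL assms(2) by (auto simp: inrange_def)
  then have "rep (b i j) - x + x \<in> I (d+2-j) (d+2-i)" using ti_add[OF J3 _ x(1)] by blast
  then have "rep (b i j) \<in> I (d+2-j) (d+2-i)" by simp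
  then show ?thesis using x qc_rep[OF J] by simp
qed

lemma B_Bmat: assumes b: "b \<in> Bcar d I" shows "Bmat (\<lambda>i j. rep (b i j)) = b"
proof (rule ext, rule ext)
  fix i j show "Bmat (\<lambda>i j. rep (b i j)) i j = b i j"
  proof (cases "inrange d i j")
    case True then show ?thesis using B_rep[OF b True] by (simp add: Bmat_def)
  next
    case False
    have "b i j = {0}" using b False unfolding Bcar_def by blast
    then show ?thesis using False by (simp add: Bmat_def)
  qed
qed

lemma Bmat_B: "(\<forall>i j. inrange d i j \<longrightarrow> M i j \<in> I (d+2-j) (d+2-i)) \<Longrightarrow> Bmat M \<in> Bcar d I"
  unfolding Bcar_def Bmat_def by auto

lemma actAM: assumes "\<forall>i j. inrange d i j \<longrightarrow> M i j \<in> I i j"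
  shows "actA d I (Amat M) (Tm Y) = Tm (\<lambda>i l. \<Sum>j=1..d. M i j * Y j l)"
proof (rule ext, rule ext)
  fix i l
  show "actA d I (Amat M) (Tm Y) i l = Tm (\<lambda>i l. \<Sum>j=1..d. M i j * Y j l) i l"
  proof (cases "inrange d i l")
    case True
    have "actA d I (Amat M) (Tm Y) i l = qcoset (I i (d+2-l)) (\<Sum>j=1..d. M i j * Y j l)"
      by (rule actA_repr[OF True]) (use True assms in \<open>auto simp: Amat_def Tm_def inrange_def\<close>)
    then show ?thesis using True by (simp add: Tm_def)
  next
    case False then show ?thesis by (simp add: actA_def Tm_def)
  qed
qed

lemma actBM: assumes "\<forall>i j. inrange d i j \<longrightarrow> M i j \<in> I (d+2-j) (d+2-i)"
  shows "actB d I (Bmat M) (Tm Y) = Tm (\<lambda>k i. \<Sum>j=1..d. Y k j * M i j)"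
proof (rule ext, rule ext)
  fix k i
  show "actB d I (Bmat M) (Tm Y) k i = Tm (\<lambda>k i. \<Sum>j=1..d. Y k j * M i j) k i"
  proof (cases "inrange d k i")
    case True
    have "actB d I (Bmat M) (Tm Y) k i = qcoset (I k (d+2-i)) (\<Sum>j=1..d. Y k j * M i j)"
      by (rule actB_repr[OF True]) (use True assms in \<open>auto simp: Bmat_def Tm_def inrange_def\<close>)
    then show ?thesis using True by (simp add: Tm_def)
  next
    case False then show ?thesis by (simp add: actB_def Tm_def)
  qed
qed

lemma actA_T: "actA d I a t \<in> Tcar d I"
proof -
  have "actA d I a t = Tm (\<lambda>i l. \<Sum>j=1..d. rep (a i j) * rep (t j l))"
    unfolding actA_def Tm_def by simp
  then show ?thesis using Tm_T by simp
qed

lemma actB_T: "actB d I b t \<in> Tcar d I"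
proof -
  have "actB d I b t = Tm (\<lambda>k i. \<Sum>j=1..d. rep (t k j) * rep (b i j))"
    unfolding actB_def Tm_def by simp
  then show ?thesis using Tm_T by simp
qed

lemma Tadd_T: assumes "t \<in> Tcar d I" "s \<in> Tcar d I" shows "Tadd t s \<in> Tcar d I"
proof -
  have "Tadd t s = Tadd (Tm (\<lambda>k l. rep (t k l))) (Tm (\<lambda>k l. rep (s k l)))"
    by (simp only: T_Tm[OF assms(1)] T_Tm[OF assms(2)])
  then show ?thesis by (simp add: Tm_add Tm_T)
qed

lemma commute:
  assumes a: "a \<in> Acar d I" and b: "b \<in> Bcar d I" and t: "t \<in> Tcar d I"
  shows "actA d I a (actB d I b t) = actB d I b (actA d I a t)"
proof -
  define MA where "MA = (\<lambda>i j. rep (a i j))"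
  define MB where "MB = (\<lambda>i j. rep (b i j))"
  define Y where "Y = (\<lambda>k l. rep (t k l))"
  have hA: "\<forall>i j. inrange d i j \<longrightarrow> MA i j \<in> I i j" using A_rep[OF a] by (simp add: MA_def)
  have hB: "\<forall>i j. inrange d i j \<longrightarrow> MB i j \<in> I (d+2-j) (d+2-i)" using B_rep[OF b] by (simp add: MB_def)
  have ea: "a = Amat MA" using A_Amat[OF a] by (simp add: MA_def)
  have eb: "b = Bmat MB" using B_Bmat[OF b] by (simp add: MB_def)
  have et: "t = Tm Y" using T_Tm[OF t] by (simp add: Y_def)
  have "actA d I a (actB d I b t) = Tm (\<lambda>i l. \<Sum>j=1..d. MA i j * (\<Sum>m=1..d. Y j m * MB l m))"
    unfolding ea eb et actBM[OF hB] actAM[OF hA] ..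
  also have "\<dots> = Tm (\<lambda>i l. \<Sum>m=1..d. (\<Sum>j=1..d. MA i j * Y j m) * MB l m)"
    apply (simp add: sum_distrib_left sum_distrib_right mult.assoc)
    apply (subst sum.swap) apply (rule refl) done
  also have "\<dots> = actB d I b (actA d I a t)"
    unfolding ea eb et actBM[OF hB] actAM[OF hA] ..
  finally show ?thesis .
qed

lemma actB_add:
  assumes b: "b \<in> Bcar d I" and t: "t \<in> Tcar d I" and s: "s \<in> Tcar d I"
  shows "actB d I b (Tadd t s) = Tadd (actB d I b t) (actB d I b s)"
proof -
  define MB where "MB = (\<lambda>i j. rep (b i j))"
  define Yt where "Yt = (\<lambda>k l. rep (t k l))"
  define Ys where "Ys = (\<lambda>k l. rep (s k l))"
  have hB: "\<forall>i j. inrange d i j \<longrightarrow> MB i j \<in> I (d+2-j) (d+2-i)" using B_rep[OF b] by (simp add: MB_def)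
  have eb: "b = Bmat MB" using B_Bmat[OF b] by (simp add: MB_def)
  have et: "t = Tm Yt" using T_Tm[OF t] by (simp add: Yt_def)
  have es: "s = Tm Ys" using T_Tm[OF s] by (simp add: Ys_def)
  have "actB d I b (Tadd t s) = Tm (\<lambda>k i. \<Sum>j=1..d. (Yt k j + Ys k j) * MB i j)"
    unfolding eb et es Tm_add actBM[OF hB] ..
  also have "\<dots> = Tm (\<lambda>k i. (\<Sum>j=1..d. Yt k j * MB i j) + (\<Sum>j=1..d. Ys k j * MB i j))"
    by (simp add: distrib_right sum.distrib)
  also have "\<dots> = Tadd (actB d I b t) (actB d I b s)"
    unfolding eb et es Tm_add actBM[OF hB] ..
  finally show ?thesis .
qed

lemma actA_add:
  assumes a: "a \<in> Acar d I" and t: "t \<in> Tcar d I" and s: "s \<in> Tcar d I"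
  shows "actA d I a (Tadd t s) = Tadd (actA d I a t) (actA d I a s)"
proof -
  define MA where "MA = (\<lambda>i j. rep (a i j))"
  define Yt where "Yt = (\<lambda>k l. rep (t k l))"
  define Ys where "Ys = (\<lambda>k l. rep (s k l))"
  have hA: "\<forall>i j. inrange d i j \<longrightarrow> MA i j \<in> I i j" using A_rep[OF a] by (simp add: MA_def)
  have ea: "a = Amat MA" using A_Amat[OF a] by (simp add: MA_def)
  have et: "t = Tm Yt" using T_Tm[OF t] by (simp add: Yt_def)
  have es: "s = Tm Ys" using T_Tm[OF s] by (simp add: Ys_def)
  have "actA d I a (Tadd t s) = Tm (\<lambda>i l. \<Sum>j=1..d. MA i j * (Yt j l + Ys j l))"
    unfolding ea et es Tm_add actAM[OF hA] ..
  also have "\<dots> = Tm (\<lambda>i l. (\<Sum>j=1..d. MA i j * Yt j l) + (\<Sum>j=1..d. MA i j * Ys j l))"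
    by (simp add: distrib_left sum.distrib)
  also have "\<dots> = Tadd (actA d I a t) (actA d I a s)"
    unfolding ea et es Tm_add actAM[OF hA] ..
  finally show ?thesis .
qed

end


context dsys
begin

definition zT :: "nat \<Rightarrow> nat \<Rightarrow> 'a set" where "zT = Tm (\<lambda>_ _. 0)"
definition Pf :: "(nat \<Rightarrow> nat \<Rightarrow> bool) \<Rightarrow> (nat \<Rightarrow> nat \<Rightarrow> 'a set) \<Rightarrow> nat \<Rightarrow> nat \<Rightarrow> 'a set" where
  "Pf S t = Tm (\<lambda>k l. if S k l then rep (t k l) else 0)"

lemma Tm_cong: "(\<And>k l. inrange d k l \<Longrightarrow> Y k l = Y' k l) \<Longrightarrow> Tm Y = Tm Y'"
  unfolding Tm_eq using idT ti_zero by fastforce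

lemma zT_T: "zT \<in> Tcar d I" by (simp add: zT_def Tm_T)

lemma Pf_T: "Pf S t \<in> Tcar d I" by (simp add: Pf_def Tm_T)

lemma Pf_add: "(\<And>k l. \<not> (S k l \<and> S' k l)) \<Longrightarrow> Tadd (Pf S t) (Pf S' t) = Pf (\<lambda>k l. S k l \<or> S' k l) t"
  unfolding Pf_def Tm_add by (rule Tm_cong) auto

lemma Pf_all: "t \<in> Tcar d I \<Longrightarrow> (\<And>k l. inrange d k l \<Longrightarrow> S k l) \<Longrightarrow> Pf S t = t"
  unfolding Pf_def using T_Tm[of t] Tm_cong[of "\<lambda>k l. if S k l then rep (t k l) else 0" "\<lambda>k l. rep (t k l)"]
  by simp

lemma Pf_none: "(\<And>k l. inrange d k l \<Longrightarrow> \<not> S k l) \<Longrightarrow> Pf S t = zT"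
  unfolding Pf_def zT_def by (rule Tm_cong) auto

lemma one_in: "1 \<le> j \<Longrightarrow> j \<le> i \<Longrightarrow> i \<le> d+1 \<Longrightarrow> 1 \<in> I i j"
  using univ by simp

lemma zero_in': "1 \<le> i \<Longrightarrow> i \<le> d+1 \<Longrightarrow> 1 \<le> j \<Longrightarrow> j \<le> d+1 \<Longrightarrow> 0 \<in> I i j"
  by (intro ti_zero idl)
lemma zero_in: "inrange d i j \<Longrightarrow> 0 \<in> I i j"
  by (rule zero_in') (auto simp: inrange_def)

lemma sum_delta1: "k \<in> {1..d} \<Longrightarrow> (\<Sum>j=1..d. (if j = k then X else 0) * (Y j :: 'a)) = X * Y k"
proof -
  assume k: "k \<in> {1..d}"
  have "(\<Sum>j=1..d. (if j = k then X else 0) * Y j) = (\<Sum>j=1..d. if j = k then X * Y j else 0)"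
    by (rule sum.cong) auto
  also have "\<dots> = X * Y k" using k by (simp add: sum.delta)
  finally show ?thesis .
qed

lemma sum_delta2: "k \<in> {1..d} \<Longrightarrow> (\<Sum>j=1..d. (Y j :: 'a) * (if j = k then X else 0)) = Y k * X"
proof -
  assume k: "k \<in> {1..d}"
  have "(\<Sum>j=1..d. Y j * (if j = k then X else 0)) = (\<Sum>j=1..d. if j = k then Y j * X else 0)"
    by (rule sum.cong) auto
  also have "\<dots> = Y k * X" using k by (simp add: sum.delta)
  finally show ?thesis .
qed

definition A0 :: "nat \<Rightarrow> nat \<Rightarrow> 'a set" where "A0 = Amat (\<lambda>_ _. 0)"
definition B0 :: "nat \<Rightarrow> nat \<Rightarrow> 'a set" where "B0 = Bmat (\<lambda>_ _. 0)"

lemma A0_A: "A0 \<in> Acar d I" unfolding A0_def by (rule Amat_A) (simp add: zero_in)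
lemma B0_B: "B0 \<in> Bcar d I" unfolding B0_def
  by (rule Bmat_B) (auto intro!: zero_in' simp: inrange_def)

lemma A0_act: "t \<in> Tcar d I \<Longrightarrow> actA d I A0 t = zT"
  using actAM[of "\<lambda>_ _. 0" "\<lambda>k l. rep (t k l)"] T_Tm[of t]
  by (simp add: A0_def zT_def zero_in)

lemma B0_act: "t \<in> Tcar d I \<Longrightarrow> actB d I B0 t = zT"
proof -
  assume t: "t \<in> Tcar d I"
  have "\<forall>i j. inrange d i j \<longrightarrow> (0::'a) \<in> I (d+2-j) (d+2-i)"
    by (auto intro!: zero_in' simp: inrange_def)
  then show ?thesis using actBM[of "\<lambda>_ _. 0" "\<lambda>k l. rep (t k l)"] T_Tm[OF t]
    by (simp add: B0_def zT_def)
qed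

lemma actB_zT: "b \<in> Bcar d I \<Longrightarrow> actB d I b zT = zT"
proof -
  assume b: "b \<in> Bcar d I"
  have hB: "\<forall>i j. inrange d i j \<longrightarrow> rep (b i j) \<in> I (d+2-j) (d+2-i)" using B_rep[OF b] by simp
  show ?thesis using actBM[OF hB, of "\<lambda>_ _. 0"] B_Bmat[OF b] by (simp add: zT_def)
qed

lemma actA_zT: "a \<in> Acar d I \<Longrightarrow> actA d I a zT = zT"
proof -
  assume a: "a \<in> Acar d I"
  have hA: "\<forall>i j. inrange d i j \<longrightarrow> rep (a i j) \<in> I i j" using A_rep[OF a] by simp
  show ?thesis using actAM[OF hA, of "\<lambda>_ _. 0"] A_Amat[OF a] by (simp add: zT_def)
qed

lemma EndA_zero: "f \<in> EndA d I \<Longrightarrow> f zT = zT"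
proof -
  assume f: "f \<in> EndA d I"
  have fz: "f zT \<in> Tcar d I" using f zT_T by (simp add: EndA_def isEndZ_def)
  have "f zT = f (actA d I A0 zT)" using A0_act[OF zT_T] by simp
  also have "\<dots> = actA d I A0 (f zT)" using f A0_A zT_T by (simp add: EndA_def)
  also have "\<dots> = zT" using A0_act[OF fz] .
  finally show ?thesis .
qed

lemma EndB_zero: "f \<in> EndB d I \<Longrightarrow> f zT = zT"
proof -
  assume f: "f \<in> EndB d I"
  have fz: "f zT \<in> Tcar d I" using f zT_T by (simp add: EndB_def isEndZ_def)
  have "f zT = f (actB d I B0 zT)" using B0_act[OF zT_T] by simp
  also have "\<dots> = actB d I B0 (f zT)" using f B0_B zT_T by (simp add: EndB_def)
  also have "\<dots> = zT" using B0_act[OF fz] .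
  finally show ?thesis .
qed

end


context dsys
begin

definition hA :: "nat \<Rightarrow> nat \<Rightarrow> nat \<Rightarrow> 'a set" where
  "hA l = Tm (\<lambda>k l'. if k = 1 \<and> l' = l then 1 else 0)"
definition EA :: "nat \<Rightarrow> nat \<Rightarrow> nat \<Rightarrow> nat \<Rightarrow> 'a set" where
  "EA k j = Amat (\<lambda>i' j'. if i' = k \<and> j' = j then 1 else 0)"
definition Bf where "Bf f = Bmat (\<lambda>i l. rep (f (hA l) 1 i))"
definition cA where "cA t l = Amat (\<lambda>i j. if j = 1 then rep (t i l) else 0)"

lemma zero_T: "inrange d k l \<Longrightarrow> 0 \<in> I k (d+2-l)"
  using ti_zero[OF idT] .

lemma hA_T: "hA l \<in> Tcar d I" by (simp add: hA_def Tm_T)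

lemma EA_A: "1 \<le> j \<Longrightarrow> j \<le> k \<Longrightarrow> k \<le> d \<Longrightarrow> EA k j \<in> Acar d I"
  unfolding EA_def by (rule Amat_A) (auto simp: zero_in one_in)

lemma EA_act: assumes "1 \<le> j" "j \<le> k" "k \<le> d"
  shows "actA d I (EA k j) (Tm Y) = Tm (\<lambda>i l. if i = k then Y j l else 0)"
proof -
  have h: "\<forall>i j'. inrange d i j' \<longrightarrow> (if i = k \<and> j' = j then 1 else 0) \<in> I i j'"
    using assms by (auto simp: zero_in one_in)
  show ?thesis unfolding EA_def actAM[OF h]
  proof (rule Tm_cong)
    fix i l assume r: "inrange d i l"
    show "(\<Sum>j'=1..d. (if i = k \<and> j' = j then 1 else 0) * Y j' l) = (if i = k then Y j l else 0)"
    proof (cases "i = k")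
      case True
      then show ?thesis using sum_delta1[of j 1 "\<lambda>j'. Y j' l"] assms by simp
    next
      case False then show ?thesis by simp
    qed
  qed
qed

lemma EndA_T: "f \<in> EndA d I \<Longrightarrow> t \<in> Tcar d I \<Longrightarrow> f t \<in> Tcar d I"
  by (simp add: EndA_def isEndZ_def)

lemma EndA_comm: "f \<in> EndA d I \<Longrightarrow> a \<in> Acar d I \<Longrightarrow> t \<in> Tcar d I \<Longrightarrow> f (actA d I a t) = actA d I a (f t)"
  by (simp add: EndA_def)

lemma EndA_add: "f \<in> EndA d I \<Longrightarrow> t \<in> Tcar d I \<Longrightarrow> s \<in> Tcar d I \<Longrightarrow> f (Tadd t s) = Tadd (f t) (f s)"
  by (simp add: EndA_def isEndZ_def)

lemma EA_vanish:
  assumes f: "f \<in> EndA d I" and j: "1 \<le> j" "j \<le> k" "k \<le> d"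
    and z: "actA d I (EA k j) (hA l) = zT" and i: "1 \<le> i" "i \<le> d"
  shows "rep (f (hA l) j i) \<in> I k (d+2-i)"
proof -
  define s where "s = f (hA l)"
  have sT: "s \<in> Tcar d I" using EndA_T[OF f hA_T] by (simp add: s_def)
  have "actA d I (EA k j) s = f (actA d I (EA k j) (hA l))"
    using EndA_comm[OF f EA_A[OF j] hA_T] by (simp add: s_def)
  also have "\<dots> = zT" using z EndA_zero[OF f] by simp
  finally have "Tm (\<lambda>i l. if i = k then rep (s j l) else 0) = Tm (\<lambda>_ _. 0)"
    using EA_act[OF j, of "\<lambda>k l. rep (s k l)"] T_Tm[OF sT] by (simp add: zT_def)
  then have "\<forall>k' l. inrange d k' l \<longrightarrow> (if k' = k then rep (s j l) else 0) - 0 \<in> I k' (d+2-l)"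
    unfolding Tm_eq .
  moreover have "inrange d k i" using i j by (simp add: inrange_def)
  ultimately have "(if k = k then rep (s j i) else 0) - 0 \<in> I k (d+2-i)" by blast
  then show ?thesis by (simp add: s_def)
qed

lemma rowk: assumes f: "f \<in> EndA d I" and k: "2 \<le> k" "k \<le> d" and i: "1 \<le> i" "i \<le> d"
  shows "rep (f (hA l) k i) \<in> I k (d+2-i)"
proof (rule EA_vanish[OF f _ _ _ _ i])
  show "actA d I (EA k k) (hA l) = zT"
    unfolding hA_def zT_def using k by (subst EA_act) (auto intro!: Tm_cong)
qed (use k in auto)

lemma row1: assumes f: "f \<in> EndA d I" and l: "2 \<le> l" "l \<le> d" and i: "1 \<le> i" "i \<le> d"
  shows "rep (f (hA l) 1 i) \<in> I (d+2-l) (d+2-i)"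
proof (rule EA_vanish[OF f _ _ _ _ i])
  have "actA d I (EA (d+2-l) 1) (hA l) = Tm (\<lambda>i' l'. if i' = d+2-l then (if l' = l then 1 else 0) else 0)"
    unfolding hA_def using l by (subst EA_act) (auto intro!: Tm_cong)
  also have "\<dots> = zT" unfolding zT_def Tm_eq
  proof (intro allI impI)
    fix k' l' assume r: "inrange d k' l'"
    show "(if k' = d+2-l then (if l' = l then 1 else 0) else 0) - 0 \<in> I k' (d+2-l')"
      using r zero_T[OF r] one_in[of "d+2-l" "d+2-l"] l by auto
  qed
  finally show "actA d I (EA (d+2-l) 1) (hA l) = zT" .
qed (use l in auto)

lemma Bf_cond: assumes f: "f \<in> EndA d I"
  shows "\<forall>i l. inrange d i l \<longrightarrow> rep (f (hA l) 1 i) \<in> I (d+2-l) (d+2-i)"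
proof (intro allI impI)
  fix i l assume r: "inrange d i l"
  show "rep (f (hA l) 1 i) \<in> I (d+2-l) (d+2-i)"
  proof (cases "l = 1")
    case True
    then have "I (d+2-l) (d+2-i) = UNIV" using r univ[of "d+2-i" "d+1"] by (auto simp: inrange_def)
    then show ?thesis by simp
  next
    case False then show ?thesis using row1[OF f] r by (auto simp: inrange_def)
  qed
qed

lemma Bf_B: "f \<in> EndA d I \<Longrightarrow> Bf f \<in> Bcar d I"
  unfolding Bf_def by (rule Bmat_B, rule Bf_cond)

lemma fh: assumes f: "f \<in> EndA d I" and l: "1 \<le> l" "l \<le> d"
  shows "f (hA l) = actB d I (Bf f) (hA l)"
proof -
  define s where "s = f (hA l)"
  have sT: "s \<in> Tcar d I" using EndA_T[OF f hA_T] by (simp add: s_def)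
  have "actB d I (Bf f) (hA l) = Tm (\<lambda>k i. \<Sum>j=1..d. (if k = 1 \<and> j = l then 1 else 0) * rep (f (hA j) 1 i))"
    unfolding Bf_def hA_def[of l] by (rule actBM[OF Bf_cond[OF f]])
  also have "\<dots> = Tm (\<lambda>k i. if k = 1 then rep (s 1 i) else 0)"
  proof (rule Tm_cong)
    fix k i assume r: "inrange d k i"
    show "(\<Sum>j=1..d. (if k = 1 \<and> j = l then 1 else 0) * rep (f (hA j) 1 i)) = (if k = 1 then rep (s 1 i) else 0)"
    proof (cases "k = 1")
      case True
      then show ?thesis using sum_delta1[of l 1 "\<lambda>j. rep (f (hA j) 1 i)"] l by (simp add: s_def)
    next
      case False then show ?thesis by simp
    qed
  qed
  also have "\<dots> = Tm (\<lambda>k i. rep (s k i))" unfolding Tm_eq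
  proof (intro allI impI)
    fix k i assume r: "inrange d k i"
    show "(if k = 1 then rep (s 1 i) else 0) - rep (s k i) \<in> I k (d+2-i)"
    proof (cases "k = 1")
      case True then show ?thesis using r zero_T[OF r] by simp
    next
      case False
      then have "rep (s k i) \<in> I k (d+2-i)" using rowk[OF f] r by (auto simp: inrange_def s_def)
      then show ?thesis using False ti_neg[OF idT[OF r]] by simp
    qed
  qed
  also have "\<dots> = f (hA l)" using T_Tm[OF sT] by (simp add: s_def)
  finally show ?thesis by simp
qed

lemma cA_A: "cA t l \<in> Acar d I"
  unfolding cA_def by (rule Amat_A) (auto simp: zero_in inrange_def univ)

lemma cA_act: assumes l: "1 \<le> l" "l \<le> d"
  shows "actA d I (cA t l) (hA l) = Pf (\<lambda>k l'. l' = l) t"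
proof -
  have h: "\<forall>i j. inrange d i j \<longrightarrow> (if j = 1 then rep (t i l) else 0) \<in> I i j"
    by (auto simp: zero_in inrange_def univ)
  show ?thesis unfolding cA_def hA_def Pf_def actAM[OF h]
  proof (rule Tm_cong)
    fix i l' assume r: "inrange d i l'"
    have "(\<Sum>j=1..d. (if j = 1 then rep (t i l) else 0) * (if j = 1 \<and> l' = l then 1 else 0))
        = rep (t i l) * (if l' = l then 1 else 0)"
      using sum_delta1[of 1 "rep (t i l)" "\<lambda>j. if j = 1 \<and> l' = l then 1 else 0"] r
      by (simp add: inrange_def)
    then show "(\<Sum>j=1..d. (if j = 1 then rep (t i l) else 0) * (if j = 1 \<and> l' = l then 1 else 0))
        = (if l' = l then rep (t i l') else 0)" by simp
  qed
qed

lemma EndA_sub: assumes f: "f \<in> EndA d I" and t: "t \<in> Tcar d I"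
  shows "f t = actB d I (Bf f) t"
proof -
  have b: "Bf f \<in> Bcar d I" using Bf_B[OF f] .
  have "m \<le> d \<longrightarrow> f (Pf (\<lambda>k l. l \<le> m) t) = actB d I (Bf f) (Pf (\<lambda>k l. l \<le> m) t)" for m
  proof (induction m)
    case 0
    have "Pf (\<lambda>k l. l \<le> 0) t = zT" by (rule Pf_none) (auto simp: inrange_def)
    then show ?case using EndA_zero[OF f] actB_zT[OF b] by simp
  next
    case (Suc m)
    show ?case
    proof
      assume m: "Suc m \<le> d"
      have e: "(\<lambda>k l. l \<le> m \<or> l = Suc m) = (\<lambda>k l. l \<le> Suc m)" by (auto simp: fun_eq_iff)
      have split: "Pf (\<lambda>k l. l \<le> Suc m) t = Tadd (Pf (\<lambda>k l. l \<le> m) t) (Pf (\<lambda>k l. l = Suc m) t)"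
      proof -
        have "Tadd (Pf (\<lambda>k l. l \<le> m) t) (Pf (\<lambda>k l. l = Suc m) t) = Pf (\<lambda>k l. l \<le> m \<or> l = Suc m) t"
          by (rule Pf_add) auto
        then show ?thesis unfolding e by simp
      qed
      have col: "f (Pf (\<lambda>k l. l = Suc m) t) = actB d I (Bf f) (Pf (\<lambda>k l. l = Suc m) t)"
      proof -
        have "f (Pf (\<lambda>k l. l = Suc m) t) = f (actA d I (cA t (Suc m)) (hA (Suc m)))"
          using cA_act[of "Suc m" t] m by simp
        also have "\<dots> = actA d I (cA t (Suc m)) (f (hA (Suc m)))"
          by (rule EndA_comm[OF f cA_A hA_T])
        also have "\<dots> = actA d I (cA t (Suc m)) (actB d I (Bf f) (hA (Suc m)))"
          using fh[OF f, of "Suc m"] m by simp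
        also have "\<dots> = actB d I (Bf f) (actA d I (cA t (Suc m)) (hA (Suc m)))"
          by (rule commute[OF cA_A b hA_T])
        also have "\<dots> = actB d I (Bf f) (Pf (\<lambda>k l. l = Suc m) t)"
          using cA_act[of "Suc m" t] m by simp
        finally show ?thesis .
      qed
      have "f (Pf (\<lambda>k l. l \<le> Suc m) t)
          = Tadd (f (Pf (\<lambda>k l. l \<le> m) t)) (f (Pf (\<lambda>k l. l = Suc m) t))"
        unfolding split by (rule EndA_add[OF f Pf_T Pf_T])
      also have "\<dots> = Tadd (actB d I (Bf f) (Pf (\<lambda>k l. l \<le> m) t)) (actB d I (Bf f) (Pf (\<lambda>k l. l = Suc m) t))"
        using Suc.IH m col by simp
      also have "\<dots> = actB d I (Bf f) (Pf (\<lambda>k l. l \<le> Suc m) t)"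
        unfolding split by (rule actB_add[OF b Pf_T Pf_T, symmetric])
      finally show "f (Pf (\<lambda>k l. l \<le> Suc m) t) = actB d I (Bf f) (Pf (\<lambda>k l. l \<le> Suc m) t)" .
    qed
  qed
  then have "f (Pf (\<lambda>k l. l \<le> d) t) = actB d I (Bf f) (Pf (\<lambda>k l. l \<le> d) t)" by simp
  moreover have "Pf (\<lambda>k l. l \<le> d) t = t" by (rule Pf_all[OF t]) (simp add: inrange_def)
  ultimately show ?thesis by simp
qed

lemma EndA_sup: assumes b: "b \<in> Bcar d I" and ft: "\<forall>t\<in>Tcar d I. f t = actB d I b t"
  shows "f \<in> EndA d I"
  unfolding EndA_def isEndZ_def
proof (intro CollectI conjI ballI)
  fix t assume t: "t \<in> Tcar d I"
  show "f t \<in> Tcar d I" using ft t actB_T by simp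
  fix s assume s: "s \<in> Tcar d I"
  show "f (Tadd t s) = Tadd (f t) (f s)"
    using ft t s Tadd_T actB_add[OF b t s] by simp
next
  fix a t assume a: "a \<in> Acar d I" and t: "t \<in> Tcar d I"
  show "f (actA d I a t) = actA d I a (f t)"
    using ft t actA_T commute[OF a b t] by simp
qed

lemma halfA: "f \<in> EndA d I \<longleftrightarrow> (\<exists>b\<in>Bcar d I. \<forall>t\<in>Tcar d I. f t = actB d I b t)"
  using EndA_sub Bf_B EndA_sup by blast

end


context dsys
begin

definition gB :: "nat \<Rightarrow> nat \<Rightarrow> nat \<Rightarrow> 'a set" where
  "gB k = Tm (\<lambda>k' l. if k' = k \<and> l = 1 then 1 else 0)"
definition EB :: "nat \<Rightarrow> nat \<Rightarrow> nat \<Rightarrow> nat \<Rightarrow> 'a set" where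
  "EB i j = Bmat (\<lambda>i' j'. if i' = i \<and> j' = j then 1 else 0)"
definition Af where "Af f = Amat (\<lambda>k' k. rep (f (gB k) k' 1))"
definition rB where "rB t k = Bmat (\<lambda>i j. if j = 1 then rep (t k i) else 0)"

lemma gB_T: "gB k \<in> Tcar d I" by (simp add: gB_def Tm_T)

lemma EB_cond: "1 \<le> j \<Longrightarrow> j \<le> i \<Longrightarrow> i \<le> d \<Longrightarrow>
  \<forall>i' j'. inrange d i' j' \<longrightarrow> (if i' = i \<and> j' = j then 1 else 0) \<in> I (d+2-j') (d+2-i')"
proof (intro allI impI)
  fix i' j' assume a: "1 \<le> j" "j \<le> i" "i \<le> d" and r: "inrange d i' j'"
  show "(if i' = i \<and> j' = j then 1 else 0) \<in> I (d+2-j') (d+2-i')"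
    using a r one_in[of "d+2-i" "d+2-j"] zero_in'[of "d+2-j'" "d+2-i'"] by (auto simp: inrange_def)
qed

lemma EB_B: "1 \<le> j \<Longrightarrow> j \<le> i \<Longrightarrow> i \<le> d \<Longrightarrow> EB i j \<in> Bcar d I"
  unfolding EB_def by (rule Bmat_B, rule EB_cond)

lemma EB_act: assumes "1 \<le> j" "j \<le> i" "i \<le> d"
  shows "actB d I (EB i j) (Tm Y) = Tm (\<lambda>k i'. if i' = i then Y k j else 0)"
  unfolding EB_def actBM[OF EB_cond[OF assms]]
proof (rule Tm_cong)
  fix k i' assume r: "inrange d k i'"
  show "(\<Sum>j'=1..d. Y k j' * (if i' = i \<and> j' = j then 1 else 0)) = (if i' = i then Y k j else 0)"
  proof (cases "i' = i")
    case True
    then show ?thesis using sum_delta2[of j "\<lambda>j'. Y k j'" 1] assms by simp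
  next
    case False then show ?thesis by simp
  qed
qed

lemma EndB_T: "f \<in> EndB d I \<Longrightarrow> t \<in> Tcar d I \<Longrightarrow> f t \<in> Tcar d I"
  by (simp add: EndB_def isEndZ_def)

lemma EndB_comm: "f \<in> EndB d I \<Longrightarrow> b \<in> Bcar d I \<Longrightarrow> t \<in> Tcar d I \<Longrightarrow> f (actB d I b t) = actB d I b (f t)"
  by (simp add: EndB_def)

lemma EndB_add: "f \<in> EndB d I \<Longrightarrow> t \<in> Tcar d I \<Longrightarrow> s \<in> Tcar d I \<Longrightarrow> f (Tadd t s) = Tadd (f t) (f s)"
  by (simp add: EndB_def isEndZ_def)

lemma EB_vanish:
  assumes f: "f \<in> EndB d I" and j: "1 \<le> j" "j \<le> i" "i \<le> d"
    and z: "actB d I (EB i j) (gB k) = zT" and k': "1 \<le> k'" "k' \<le> d"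
  shows "rep (f (gB k) k' j) \<in> I k' (d+2-i)"
proof -
  define s where "s = f (gB k)"
  have sT: "s \<in> Tcar d I" using EndB_T[OF f gB_T] by (simp add: s_def)
  have "actB d I (EB i j) s = f (actB d I (EB i j) (gB k))"
    using EndB_comm[OF f EB_B[OF j] gB_T] by (simp add: s_def)
  also have "\<dots> = zT" using z EndB_zero[OF f] by simp
  finally have "Tm (\<lambda>k i'. if i' = i then rep (s k j) else 0) = Tm (\<lambda>_ _. 0)"
    using EB_act[OF j, of "\<lambda>k l. rep (s k l)"] T_Tm[OF sT] by (simp add: zT_def)
  then have "\<forall>k l. inrange d k l \<longrightarrow> (if l = i then rep (s k j) else 0) - 0 \<in> I k (d+2-l)"
    unfolding Tm_eq .
  moreover have "inrange d k' i" using k' j by (simp add: inrange_def)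
  ultimately have "(if i = i then rep (s k' j) else 0) - 0 \<in> I k' (d+2-i)" by blast
  then show ?thesis by (simp add: s_def)
qed

lemma colk: assumes f: "f \<in> EndB d I" and i: "2 \<le> i" "i \<le> d" and k': "1 \<le> k'" "k' \<le> d"
  shows "rep (f (gB k) k' i) \<in> I k' (d+2-i)"
proof (rule EB_vanish[OF f _ _ _ _ k'])
  show "actB d I (EB i i) (gB k) = zT"
    unfolding gB_def zT_def using i by (subst EB_act) (auto intro!: Tm_cong)
qed (use i in auto)

lemma col1: assumes f: "f \<in> EndB d I" and k: "2 \<le> k" "k \<le> d" and k': "1 \<le> k'" "k' \<le> d"
  shows "rep (f (gB k) k' 1) \<in> I k' k"
proof -
  have e: "d+2-(d+2-k) = k" using k by simp
  have "rep (f (gB k) k' 1) \<in> I k' (d+2-(d+2-k))"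
  proof (rule EB_vanish[OF f _ _ _ _ k'])
    have "actB d I (EB (d+2-k) 1) (gB k) = Tm (\<lambda>k'' i'. if i' = d+2-k then (if k'' = k then 1 else 0) else 0)"
      unfolding gB_def using k by (subst EB_act) (auto intro!: Tm_cong)
    also have "\<dots> = zT" unfolding zT_def Tm_eq
    proof (intro allI impI)
      fix k'' l' assume r: "inrange d k'' l'"
      show "(if l' = d+2-k then (if k'' = k then 1 else 0) else 0) - 0 \<in> I k'' (d+2-l')"
        using r zero_T[OF r] one_in[of k k] k e by auto
    qed
    finally show "actB d I (EB (d+2-k) 1) (gB k) = zT" .
  qed (use k in auto)
  then show ?thesis using e by simp
qed

lemma Af_cond: assumes f: "f \<in> EndB d I"
  shows "\<forall>k' k. inrange d k' k \<longrightarrow> rep (f (gB k) k' 1) \<in> I k' k"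
proof (intro allI impI)
  fix k' k assume r: "inrange d k' k"
  show "rep (f (gB k) k' 1) \<in> I k' k"
  proof (cases "k = 1")
    case True
    then have "I k' k = UNIV" using r univ[of 1 k'] by (auto simp: inrange_def)
    then show ?thesis by simp
  next
    case False then show ?thesis using col1[OF f] r by (auto simp: inrange_def)
  qed
qed

lemma Af_A: "f \<in> EndB d I \<Longrightarrow> Af f \<in> Acar d I"
  unfolding Af_def by (rule Amat_A, rule Af_cond)

lemma fg: assumes f: "f \<in> EndB d I" and k: "1 \<le> k" "k \<le> d"
  shows "f (gB k) = actA d I (Af f) (gB k)"
proof -
  define s where "s = f (gB k)"
  have sT: "s \<in> Tcar d I" using EndB_T[OF f gB_T] by (simp add: s_def)
  have "actA d I (Af f) (gB k) = Tm (\<lambda>k' i. \<Sum>j=1..d. rep (f (gB j) k' 1) * (if j = k \<and> i = 1 then 1 else 0))"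
    unfolding Af_def gB_def[of k] by (rule actAM[OF Af_cond[OF f]])
  also have "\<dots> = Tm (\<lambda>k' i. if i = 1 then rep (s k' 1) else 0)"
  proof (rule Tm_cong)
    fix k' i assume r: "inrange d k' i"
    show "(\<Sum>j=1..d. rep (f (gB j) k' 1) * (if j = k \<and> i = 1 then 1 else 0)) = (if i = 1 then rep (s k' 1) else 0)"
    proof (cases "i = 1")
      case True
      then show ?thesis using sum_delta2[of k "\<lambda>j. rep (f (gB j) k' 1)" 1] k by (simp add: s_def)
    next
      case False then show ?thesis by simp
    qed
  qed
  also have "\<dots> = Tm (\<lambda>k i. rep (s k i))" unfolding Tm_eq
  proof (intro allI impI)
    fix k' i assume r: "inrange d k' i"
    show "(if i = 1 then rep (s k' 1) else 0) - rep (s k' i) \<in> I k' (d+2-i)"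
    proof (cases "i = 1")
      case True then show ?thesis using r zero_T[OF r] by simp
    next
      case False
      then have "rep (s k' i) \<in> I k' (d+2-i)" using colk[OF f] r by (auto simp: inrange_def s_def)
      then show ?thesis using False ti_neg[OF idT[OF r]] by simp
    qed
  qed
  also have "\<dots> = f (gB k)" using T_Tm[OF sT] by (simp add: s_def)
  finally show ?thesis by simp
qed

lemma rB_cond: "\<forall>i j. inrange d i j \<longrightarrow> (if j = 1 then rep (t k i) else 0) \<in> I (d+2-j) (d+2-i)"
proof (intro allI impI)
  fix i j assume r: "inrange d i j"
  show "(if j = 1 then rep (t k i) else 0) \<in> I (d+2-j) (d+2-i)"
  proof (cases "j = 1")
    case True
    then have "I (d+2-j) (d+2-i) = UNIV" using r univ[of "d+2-i" "d+1"] by (auto simp: inrange_def)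
    then show ?thesis by simp
  next
    case False then show ?thesis using r zero_in'[of "d+2-j" "d+2-i"] by (auto simp: inrange_def)
  qed
qed

lemma rB_B: "rB t k \<in> Bcar d I"
  unfolding rB_def by (rule Bmat_B, rule rB_cond)

lemma rB_act: assumes k: "1 \<le> k" "k \<le> d"
  shows "actB d I (rB t k) (gB k) = Pf (\<lambda>k' l. k' = k) t"
  unfolding rB_def gB_def Pf_def actBM[OF rB_cond]
proof (rule Tm_cong)
  fix k' i assume r: "inrange d k' i"
  have "(\<Sum>j=1..d. (if k' = k \<and> j = 1 then 1 else 0) * (if j = 1 then rep (t k i) else 0))
      = (if k' = k then 1 else 0) * rep (t k i)"
    using sum_delta2[of 1 "\<lambda>j. if k' = k \<and> j = 1 then 1 else 0" "rep (t k i)"] r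
    by (simp add: inrange_def)
  then show "(\<Sum>j=1..d. (if k' = k \<and> j = 1 then 1 else 0) * (if j = 1 then rep (t k i) else 0))
      = (if k' = k then rep (t k' i) else 0)" by simp
qed

lemma EndB_sub: assumes f: "f \<in> EndB d I" and t: "t \<in> Tcar d I"
  shows "f t = actA d I (Af f) t"
proof -
  have a: "Af f \<in> Acar d I" using Af_A[OF f] .
  have "m \<le> d \<longrightarrow> f (Pf (\<lambda>k l. k \<le> m) t) = actA d I (Af f) (Pf (\<lambda>k l. k \<le> m) t)" for m
  proof (induction m)
    case 0
    have "Pf (\<lambda>k l. k \<le> 0) t = zT" by (rule Pf_none) (auto simp: inrange_def)
    then show ?case using EndB_zero[OF f] actA_zT[OF a] by simp
  next
    case (Suc m)
    show ?case
    proof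
      assume m: "Suc m \<le> d"
      have e: "(\<lambda>k l. k \<le> m \<or> k = Suc m) = (\<lambda>k l. k \<le> Suc m)" by (auto simp: fun_eq_iff)
      have split: "Pf (\<lambda>k l. k \<le> Suc m) t = Tadd (Pf (\<lambda>k l. k \<le> m) t) (Pf (\<lambda>k l. k = Suc m) t)"
      proof -
        have "Tadd (Pf (\<lambda>k l. k \<le> m) t) (Pf (\<lambda>k l. k = Suc m) t) = Pf (\<lambda>k l. k \<le> m \<or> k = Suc m) t"
          by (rule Pf_add) auto
        then show ?thesis unfolding e by simp
      qed
      have row: "f (Pf (\<lambda>k l. k = Suc m) t) = actA d I (Af f) (Pf (\<lambda>k l. k = Suc m) t)"
      proof -
        have "f (Pf (\<lambda>k l. k = Suc m) t) = f (actB d I (rB t (Suc m)) (gB (Suc m)))"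
          using rB_act[of "Suc m" t] m by simp
        also have "\<dots> = actB d I (rB t (Suc m)) (f (gB (Suc m)))"
          by (rule EndB_comm[OF f rB_B gB_T])
        also have "\<dots> = actB d I (rB t (Suc m)) (actA d I (Af f) (gB (Suc m)))"
          using fg[OF f, of "Suc m"] m by simp
        also have "\<dots> = actA d I (Af f) (actB d I (rB t (Suc m)) (gB (Suc m)))"
          by (rule commute[OF a rB_B gB_T, symmetric])
        also have "\<dots> = actA d I (Af f) (Pf (\<lambda>k l. k = Suc m) t)"
          using rB_act[of "Suc m" t] m by simp
        finally show ?thesis .
      qed
      have "f (Pf (\<lambda>k l. k \<le> Suc m) t)
          = Tadd (f (Pf (\<lambda>k l. k \<le> m) t)) (f (Pf (\<lambda>k l. k = Suc m) t))"
        unfolding split by (rule EndB_add[OF f Pf_T Pf_T])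
      also have "\<dots> = Tadd (actA d I (Af f) (Pf (\<lambda>k l. k \<le> m) t)) (actA d I (Af f) (Pf (\<lambda>k l. k = Suc m) t))"
        using Suc.IH m row by simp
      also have "\<dots> = actA d I (Af f) (Pf (\<lambda>k l. k \<le> Suc m) t)"
        unfolding split by (rule actA_add[OF a Pf_T Pf_T, symmetric])
      finally show "f (Pf (\<lambda>k l. k \<le> Suc m) t) = actA d I (Af f) (Pf (\<lambda>k l. k \<le> Suc m) t)" .
    qed
  qed
  then have "f (Pf (\<lambda>k l. k \<le> d) t) = actA d I (Af f) (Pf (\<lambda>k l. k \<le> d) t)" by simp
  moreover have "Pf (\<lambda>k l. k \<le> d) t = t" by (rule Pf_all[OF t]) (simp add: inrange_def)
  ultimately show ?thesis by simp
qed

lemma EndB_sup: assumes a: "a \<in> Acar d I" and ft: "\<forall>t\<in>Tcar d I. f t = actA d I a t"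
  shows "f \<in> EndB d I"
  unfolding EndB_def isEndZ_def
proof (intro CollectI conjI ballI)
  fix t assume t: "t \<in> Tcar d I"
  show "f t \<in> Tcar d I" using ft t actA_T by simp
  fix s assume s: "s \<in> Tcar d I"
  show "f (Tadd t s) = Tadd (f t) (f s)"
    using ft t s Tadd_T actA_add[OF a t s] by simp
next
  fix b t assume b: "b \<in> Bcar d I" and t: "t \<in> Tcar d I"
  show "f (actB d I b t) = actB d I b (f t)"
    using ft t actB_T commute[OF a b t] by simp
qed

lemma halfB: "f \<in> EndB d I \<longleftrightarrow> (\<exists>a\<in>Acar d I. \<forall>t\<in>Tcar d I. f t = actA d I a t)"
  using EndB_sub Af_A EndB_sup by blast

end

theorem proposition4p2:
  fixes d :: nat and I :: "nat \<Rightarrow> nat \<Rightarrow> 'a::ring_1 set"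
  assumes "d_system d I"
  shows "(\<forall>f. f \<in> EndA d I \<longleftrightarrow> (\<exists>b\<in>Bcar d I. \<forall>t\<in>Tcar d I. f t = actB d I b t)) \<and>
         (\<forall>f. f \<in> EndB d I \<longleftrightarrow> (\<exists>a\<in>Acar d I. \<forall>t\<in>Tcar d I. f t = actA d I a t))"
proof -
  interpret dsys d I by (unfold_locales) (rule assms)
  show ?thesis using halfA halfB by blast
qed


end
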